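(* Every compact Rothberger space is productively weakly Rothberger: if $X$ is compact and Rothberger and $Y$ is weakly Rothberger, then $X\times Y$ is weakly Rothberger.
   Context: All spaces are infinite ${\sf T}_1$ topological spaces. Rothberger: for each sequence $(\mathcal{U}_n)$ of open covers there are $U_n\in\mathcal{U}_n$ with $\{U_n:n\in\mathbb{N}\}$ a cover. Weakly Rothberger: for each sequence $(\mathcal{U}_n)$ of open covers there are $U_n\in\mathcal{U}_n$ with $\bigcup_nU_n$ dense in the space. *)

theory Defs
  imports "HOL-Analysis.Analysis"
begin

definition open_cover :: "'a topology \<Rightarrow> 'a set set \<Rightarrow> bool" where
  "open_cover X \<U> \<longleftrightarrow> (\<forall>U\<in>\<U>. openin X U) \<and> \<Union>\<U> = topspace X"

definition rothberger :: "'a topology \<Rightarrow> bool" where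
  "rothberger X \<longleftrightarrow>
     (\<forall>\<U> :: nat \<Rightarrow> 'a set set. (\<forall>n. open_cover X (\<U> n)) \<longrightarrow>
        (\<exists>U. (\<forall>n. U n \<in> \<U> n) \<and> \<Union>(range U) = topspace X))"

definition weakly_rothberger :: "'a topology \<Rightarrow> bool" where
  "weakly_rothberger X \<longleftrightarrow>
     (\<forall>\<U> :: nat \<Rightarrow> 'a set set. (\<forall>n. open_cover X (\<U> n)) \<longrightarrow>
        (\<exists>U. (\<forall>n. U n \<in> \<U> n) \<and> X closure_of (\<Union>(range U)) = topspace X))"

end

theory Submission
  imports Defs
begin

lemma keyA:
  fixes X :: "'a topology" and Y :: "'b topology" and C :: "nat \<Rightarrow> ('a \<times> 'b) set set"
  assumes cX: "compact_space X" and rX: "rothberger X"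
    and y: "y \<in> topspace Y"
    and C: "\<And>k. open_cover (prod_topology X Y) (C k)"
  shows "\<exists>g V. (\<forall>k. g k \<in> C k) \<and> openin Y V \<and> y \<in> V \<and> topspace X \<times> V \<subseteq> \<Union>(range g)"
proof -
  define D where "D (k::nat) = {U. openin X U \<and> (\<exists>W\<in>C k. \<exists>V. openin Y V \<and> y \<in> V \<and> U \<times> V \<subseteq> W)}" for k
  have DC: "open_cover X (D k)" for k
  proof -
    have "\<Union>(D k) \<subseteq> topspace X" unfolding D_def using openin_subset by blast
    moreover have "topspace X \<subseteq> \<Union>(D k)"
    proof
      fix x assume x: "x \<in> topspace X"
      then have "(x,y) \<in> topspace (prod_topology X Y)" using y by simp
      then obtain W where W: "W \<in> C k" "(x,y) \<in> W"
        using C[of k] unfolding open_cover_def by blast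
      then have "openin (prod_topology X Y) W" using C[of k] unfolding open_cover_def by blast
      then obtain U V where "openin X U" "openin Y V" "x \<in> U" "y \<in> V" "U \<times> V \<subseteq> W"
        using W(2) unfolding openin_prod_topology_alt by blast
      then show "x \<in> \<Union>(D k)" unfolding D_def using W(1) by blast
    qed
    ultimately have "\<Union>(D k) = topspace X" by (rule subset_antisym)
    moreover have "\<forall>A\<in>D k. openin X A" unfolding D_def by blast
    ultimately show ?thesis unfolding open_cover_def by blast
  qed
  then obtain U where U: "\<And>k. U k \<in> D k" and Ucov: "\<Union>(range U) = topspace X"
    using rX[unfolded rothberger_def, rule_format, of D, OF DC] by blast
  have "\<forall>k. \<exists>W V. W \<in> C k \<and> openin Y V \<and> y \<in> V \<and> U k \<times> V \<subseteq> W"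
    using U unfolding D_def by blast
  then obtain Wf where "\<forall>k. \<exists>V. Wf k \<in> C k \<and> openin Y V \<and> y \<in> V \<and> U k \<times> V \<subseteq> Wf k"
    by (rule choice[THEN exE]) 
  then obtain Vf where "\<forall>k. Wf k \<in> C k \<and> openin Y (Vf k) \<and> y \<in> Vf k \<and> U k \<times> Vf k \<subseteq> Wf k"
    by (rule choice[THEN exE])
  then obtain Wf Vf where WV: "\<And>k. Wf k \<in> C k \<and> openin Y (Vf k) \<and> y \<in> Vf k \<and> U k \<times> Vf k \<subseteq> Wf k"
    by blast
  have Uo: "\<And>k. openin X (U k)" using U unfolding D_def by blast
  obtain F where F: "finite F" "F \<subseteq> range U" "topspace X \<subseteq> \<Union>F"
  proof -
    have "(\<forall>A\<in>range U. openin X A) \<and> topspace X \<subseteq> \<Union>(range U)" using Uo Ucov by auto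
    from cX[unfolded compact_space_alt, rule_format, OF this] show ?thesis using that by blast
  qed
  obtain K where K: "finite K" "F = U ` K" using finite_subset_image[OF F(1) F(2)] by blast
  define V where "V = topspace Y \<inter> (\<Inter>k\<in>K. Vf k)"
  have "openin Y V" unfolding V_def
    using K(1) WV by (intro openin_Int_Inter) auto
  moreover have "y \<in> V" unfolding V_def using y WV by auto
  moreover have "topspace X \<times> V \<subseteq> \<Union>(range Wf)"
  proof
    fix p assume p: "p \<in> topspace X \<times> V"
    then obtain a b where ab: "p = (a,b)" "a \<in> topspace X" "b \<in> V" by auto
    then obtain k where k: "k \<in> K" "a \<in> U k" using F K by auto
    then have "b \<in> Vf k" using ab V_def by auto
    then have "p \<in> Wf k" using WV[of k] k ab by auto
    then show "p \<in> \<Union>(range Wf)" by auto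
  qed
  ultimately show ?thesis using WV by blast
qed

theorem lemma5p22:
  fixes X :: "'a topology" and Y :: "'b topology"
  assumes "infinite (topspace X)" and "t1_space X"
    and "infinite (topspace Y)" and "t1_space Y"
    and "compact_space X" and "rothberger X"
    and "weakly_rothberger Y"
  shows "weakly_rothberger (prod_topology X Y)"
  unfolding weakly_rothberger_def
proof (intro allI impI)
  fix W :: "nat \<Rightarrow> ('a \<times> 'b) set set"
  assume W: "\<forall>n. open_cover (prod_topology X Y) (W n)"
  define W' where "W' m k = W (prod_encode (m,k))" for m k
  define E where "E m = {V. openin Y V \<and> (\<exists>g. (\<forall>k. g k \<in> W' m k) \<and> topspace X \<times> V \<subseteq> \<Union>(range g))}" for m
  have EC: "open_cover Y (E m)" for m
  proof -
    have "\<Union>(E m) \<subseteq> topspace Y" unfolding E_def using openin_subset by blast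
    moreover have "topspace Y \<subseteq> \<Union>(E m)"
    proof
      fix y assume y: "y \<in> topspace Y"
      have "\<And>k. open_cover (prod_topology X Y) (W' m k)" using W W'_def by simp
      from keyA[OF assms(5,6) y, of "W' m", OF this] obtain g V where
        "(\<forall>k. g k \<in> W' m k)" "openin Y V" "y \<in> V" "topspace X \<times> V \<subseteq> \<Union>(range g)" by blast
      then show "y \<in> \<Union>(E m)" unfolding E_def by blast
    qed
    ultimately have "\<Union>(E m) = topspace Y" by (rule subset_antisym)
    moreover have "\<forall>A\<in>E m. openin Y A" unfolding E_def by blast
    ultimately show ?thesis unfolding open_cover_def by blast
  qed
  then obtain V where V: "\<And>m. V m \<in> E m" and Vd: "Y closure_of \<Union>(range V) = topspace Y"
    using assms(7)[unfolded weakly_rothberger_def, rule_format, of E, OF EC] by blast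
  have "\<forall>m. \<exists>g. (\<forall>k. g k \<in> W' m k) \<and> topspace X \<times> V m \<subseteq> \<Union>(range g)"
    using V unfolding E_def by blast
  then obtain g where g: "\<And>m. (\<forall>k. g m k \<in> W' m k) \<and> topspace X \<times> V m \<subseteq> \<Union>(range (g m))"
    by (rule choice[THEN exE]) blast
  define S where "S n = g (fst (prod_decode n)) (snd (prod_decode n))" for n
  have S1: "\<forall>n. S n \<in> W n"
  proof
    fix n
    have "S n \<in> W' (fst (prod_decode n)) (snd (prod_decode n))" using g unfolding S_def by blast
    then show "S n \<in> W n" unfolding W'_def by simp
  qed
  have sub: "topspace X \<times> \<Union>(range V) \<subseteq> \<Union>(range S)"
  proof
    fix p assume "p \<in> topspace X \<times> \<Union>(range V)"
    then obtain m where "p \<in> topspace X \<times> V m" by auto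
    then obtain k where "p \<in> g m k" using g[of m] by auto
    moreover have "S (prod_encode (m,k)) = g m k" unfolding S_def by simp
    ultimately have "p \<in> S (prod_encode (m,k))" by simp
    then show "p \<in> \<Union>(range S)" by blast
  qed
  have "topspace (prod_topology X Y) \<subseteq> prod_topology X Y closure_of \<Union>(range S)"
  proof -
    have "prod_topology X Y closure_of (topspace X \<times> \<Union>(range V)) \<subseteq> prod_topology X Y closure_of \<Union>(range S)"
      using sub by (rule closure_of_mono)
    moreover have "prod_topology X Y closure_of (topspace X \<times> \<Union>(range V)) = topspace (prod_topology X Y)"
      by (simp add: closure_of_Times Vd)
    ultimately show ?thesis by simp
  qed
  then have "prod_topology X Y closure_of \<Union>(range S) = topspace (prod_topology X Y)"
    using closure_of_subset_topspace[of "prod_topology X Y" "\<Union>(range S)"] by (rule subset_antisym[rotated])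
  then show "\<exists>U. (\<forall>n. U n \<in> W n) \<and> prod_topology X Y closure_of \<Union>(range U) = topspace (prod_topology X Y)"
    using S1 by blast
qed

end
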